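(* Let $(X^n)_{n\ge1}$ be a sequence of FK-spaces containing $\phi$ and let $Y=\bigcap_nX^n$ with its intersection FK-topology. Then $E(Y)=\bigcap_nE(X^n)$ for each of $E=D_p^qS,\ D_p^qW,\ D_p^qF,\ D_p^qB$.
   Context: An FK-space is a vector subspace of the space $w$ of all complex sequences with a complete metrizable locally convex topology in which coordinate functionals are continuous; $X'$ is its continuous dual. If $X^n$ has paranorm $\rho_n$ and seminorms $(s_{nk})_k$, then $Y=\bigcap_nX^n$ is an FK-space with paranorm $\sum_n\rho_n/(2^n(1+\rho_n))$ and seminorms $(s_{nk})_{n,k}$. $\delta^j$ has $1$ in position $j$, $0$ elsewhere; $\phi=\operatorname{span}\{\delta^j\}$. $p(n)<q(n)$ are nonnegative integer sequences with $q(n)\to\infty$. For $x\in w$, $x^{(k)}=\sum_{j=1}^kx_j\delta^j$ and $T_n(x)=\frac{1}{q(n)-p(n)}\sum_{k=p(n)+1}^{q(n)}x^{(k)}$. For an FK-space $X\supseteq\phi$: $D_p^qS(X)=\{x\in X: T_n(x)\to x\text{ in }X\}$; $D_p^qW(X)=\{x\in X: f(T_n(x))\to f(x)\ \forall f\in X'\}$; $D_p^qF(X)=\{x\in X:\lim_n f(T_n(x))\text{ exists }\forall f\in X'\}$; $D_p^qB(X)=\{x\in X:\sup_n|f(T_n(x))|<\infty\ \forall f\in X'\}$. *)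

theory Defs
  imports "HOL-Analysis.Analysis" "HOL-Library.Function_Algebras"
begin

type_synonym seqc = "nat \<Rightarrow> complex"

text \<open>Coordinates are indexed from 0 (the paper indexes from 1).\<close>

definition phi :: "seqc set" where
  "phi = {x. finite {j. x j \<noteq> 0}}"

definition FKtop :: "seqc set \<Rightarrow> ('i \<Rightarrow> seqc \<Rightarrow> real) \<Rightarrow> seqc topology" where
  "FKtop X s = topology (\<lambda>U. U \<subseteq> X \<and>
      (\<forall>x\<in>U. \<exists>F e. finite F \<and> e > 0 \<and> {y\<in>X. \<forall>i\<in>F. s i (y - x) < e} \<subseteq> U))"

definition FK_space :: "seqc set \<Rightarrow> ('i::countable \<Rightarrow> seqc \<Rightarrow> real) \<Rightarrow> bool" where
  "FK_space X s \<longleftrightarrow>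
     0 \<in> X \<and> (\<forall>x\<in>X. \<forall>y\<in>X. x + y \<in> X) \<and> (\<forall>c. \<forall>x\<in>X. (\<lambda>j. c * x j) \<in> X) \<and>
     (\<forall>i. \<forall>x\<in>X. s i x \<ge> 0) \<and>
     (\<forall>i. \<forall>x\<in>X. \<forall>y\<in>X. s i (x + y) \<le> s i x + s i y) \<and>
     (\<forall>i c. \<forall>x\<in>X. s i (\<lambda>j. c * x j) = cmod c * s i x) \<and>
     (\<forall>x\<in>X. (\<forall>i. s i x = 0) \<longrightarrow> x = 0) \<and>
     (\<forall>u. (\<forall>m. u m \<in> X) \<longrightarrow>
          (\<forall>i. \<forall>e>0. \<exists>N. \<forall>m\<ge>N. \<forall>n\<ge>N. s i (u m - u n) < e) \<longrightarrow>
          (\<exists>x\<in>X. \<forall>i. (\<lambda>m. s i (u m - x)) \<longlonglongrightarrow> 0)) \<and>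
     (\<forall>j. continuous_map (FKtop X s) euclidean (\<lambda>x. x j))"

definition FK_dual :: "seqc set \<Rightarrow> ('i \<Rightarrow> seqc \<Rightarrow> real) \<Rightarrow> (seqc \<Rightarrow> complex) set" where
  "FK_dual X s = {f. (\<forall>x\<in>X. \<forall>y\<in>X. f (x + y) = f x + f y) \<and>
                     (\<forall>c. \<forall>x\<in>X. f (\<lambda>j. c * x j) = c * f x) \<and>
                     continuous_map (FKtop X s) euclidean f}"

definition sect :: "nat \<Rightarrow> seqc \<Rightarrow> seqc" where
  "sect k x = (\<lambda>j. if j < k then x j else 0)"

definition Tmean :: "(nat \<Rightarrow> nat) \<Rightarrow> (nat \<Rightarrow> nat) \<Rightarrow> nat \<Rightarrow> seqc \<Rightarrow> seqc" where
  "Tmean p q n x = (\<lambda>j. (1 / of_nat (q n - p n)) * (\<Sum>k\<in>{p n<..q n}. sect k x j))"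

definition DS :: "(nat \<Rightarrow> nat) \<Rightarrow> (nat \<Rightarrow> nat) \<Rightarrow> seqc set \<Rightarrow> ('i \<Rightarrow> seqc \<Rightarrow> real) \<Rightarrow> seqc set" where
  "DS p q X s = {x\<in>X. limitin (FKtop X s) (\<lambda>n. Tmean p q n x) x sequentially}"

definition DW :: "(nat \<Rightarrow> nat) \<Rightarrow> (nat \<Rightarrow> nat) \<Rightarrow> seqc set \<Rightarrow> ('i \<Rightarrow> seqc \<Rightarrow> real) \<Rightarrow> seqc set" where
  "DW p q X s = {x\<in>X. \<forall>f\<in>FK_dual X s. (\<lambda>n. f (Tmean p q n x)) \<longlonglongrightarrow> f x}"

definition DF :: "(nat \<Rightarrow> nat) \<Rightarrow> (nat \<Rightarrow> nat) \<Rightarrow> seqc set \<Rightarrow> ('i \<Rightarrow> seqc \<Rightarrow> real) \<Rightarrow> seqc set" where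
  "DF p q X s = {x\<in>X. \<forall>f\<in>FK_dual X s. convergent (\<lambda>n. f (Tmean p q n x))}"

definition DB :: "(nat \<Rightarrow> nat) \<Rightarrow> (nat \<Rightarrow> nat) \<Rightarrow> seqc set \<Rightarrow> ('i \<Rightarrow> seqc \<Rightarrow> real) \<Rightarrow> seqc set" where
  "DB p q X s = {x\<in>X. \<forall>f\<in>FK_dual X s. bounded (range (\<lambda>n. f (Tmean p q n x)))}"

end

theory Submission
  imports Defs
begin


instantiation "fun" :: (type, real_vector) real_vector
begin
definition scaleR_fun :: "real \<Rightarrow> ('a \<Rightarrow> 'b) \<Rightarrow> 'a \<Rightarrow> 'b" where
  "scaleR_fun c f = (\<lambda>x. c *\<^sub>R f x)"
instance
  by standard (auto simp: scaleR_fun_def fun_eq_iff scaleR_add_right scaleR_add_left)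
end

lemma scaleR_fun_apply: "(c *\<^sub>R f) x = c *\<^sub>R f x"
  by (simp add: scaleR_fun_def)

definition goodG :: "'a::real_vector set \<Rightarrow> ('a \<Rightarrow> real) \<Rightarrow> 'a set \<Rightarrow> ('a \<Rightarrow> real) \<Rightarrow> ('a \<times> real) set \<Rightarrow> bool" where
  "goodG V p M f G \<longleftrightarrow>
    (\<forall>x y1 y2. (x,y1)\<in>G \<longrightarrow> (x,y2)\<in>G \<longrightarrow> y1 = y2) \<and>
    Domain G \<subseteq> V \<and>
    (\<forall>x y. (x,y)\<in>G \<longrightarrow> y \<le> p x) \<and>
    (\<forall>x\<in>M. (x, f x) \<in> G) \<and>
    (\<forall>x1 y1 x2 y2. (x1,y1)\<in>G \<longrightarrow> (x2,y2)\<in>G \<longrightarrow> (x1+x2, y1+y2) \<in> G) \<and>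
    (\<forall>c x y. (x,y)\<in>G \<longrightarrow> (c *\<^sub>R x, c*y) \<in> G)"

lemma goodD:
  assumes "goodG V p M f G"
  shows "\<And>x y1 y2. (x,y1)\<in>G \<Longrightarrow> (x,y2)\<in>G \<Longrightarrow> y1 = y2"
    and "\<And>x y. (x,y)\<in>G \<Longrightarrow> x \<in> V"
    and "\<And>x y. (x,y)\<in>G \<Longrightarrow> y \<le> p x"
    and "\<And>x. x\<in>M \<Longrightarrow> (x, f x) \<in> G"
    and "\<And>x1 y1 x2 y2. (x1,y1)\<in>G \<Longrightarrow> (x2,y2)\<in>G \<Longrightarrow> (x1+x2, y1+y2) \<in> G"
    and "\<And>c x y. (x,y)\<in>G \<Longrightarrow> (c *\<^sub>R x, c*y) \<in> G"
  using assms unfolding goodG_def by blast+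

lemma HB_real:
  fixes p :: "'a::real_vector \<Rightarrow> real"
  assumes V: "subspace V"
    and padd: "\<And>x y. x\<in>V \<Longrightarrow> y\<in>V \<Longrightarrow> p (x+y) \<le> p x + p y"
    and pscale: "\<And>c x. x\<in>V \<Longrightarrow> c \<ge> 0 \<Longrightarrow> p (c *\<^sub>R x) = c * p x"
    and M: "subspace M" "M \<subseteq> V"
    and fadd: "\<And>x y. x\<in>M \<Longrightarrow> y\<in>M \<Longrightarrow> f (x+y) = f x + f y"
    and fscale: "\<And>c x. x\<in>M \<Longrightarrow> f (c *\<^sub>R x) = c * f x"
    and fp: "\<And>x. x\<in>M \<Longrightarrow> f x \<le> p x"
  shows "\<exists>g. (\<forall>x\<in>V. \<forall>y\<in>V. g (x+y) = g x + g y) \<and> (\<forall>c. \<forall>x\<in>V. g (c *\<^sub>R x) = c * g x)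
           \<and> (\<forall>x\<in>M. g x = f x) \<and> (\<forall>x\<in>V. g x \<le> p x)"
proof -
  let ?A = "{G. goodG V p M f G}"
  define G0 where "G0 = {(x, f x) | x. x \<in> M}"
  have G0: "G0 \<in> ?A"
    using M fadd fscale fp unfolding goodG_def G0_def
    by (auto simp: subspace_def)
  have "\<forall>C\<in>chains ?A. \<exists>U\<in>?A. \<forall>X\<in>C. X \<subseteq> U"
  proof
    fix C assume C: "C \<in> chains ?A"
    show "\<exists>U\<in>?A. \<forall>X\<in>C. X \<subseteq> U"
    proof (cases "C = {}")
      case True then show ?thesis using G0 by blast
    next
      case False
      have CA: "\<And>G. G \<in> C \<Longrightarrow> goodG V p M f G" using C by (auto simp: chains_def)
      have ch: "\<And>G1 G2. G1 \<in> C \<Longrightarrow> G2 \<in> C \<Longrightarrow> G1 \<subseteq> G2 \<or> G2 \<subseteq> G1"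
        using C by (auto simp: chains_def chain_subset_def)
      have "goodG V p M f (\<Union>C)"
        unfolding goodG_def
      proof (intro conjI allI impI ballI)
        fix x y1 y2 assume "(x,y1) \<in> \<Union>C" "(x,y2) \<in> \<Union>C"
        then obtain G1 G2 where g: "G1\<in>C" "G2\<in>C" "(x,y1)\<in>G1" "(x,y2)\<in>G2" by auto
        show "y1 = y2"
        proof (cases "G1 \<subseteq> G2")
          case True then show ?thesis using goodD(1)[OF CA[OF g(2)]] g by blast
        next
          case False then have "G2 \<subseteq> G1" using ch[OF g(1,2)] by blast
          then show ?thesis using goodD(1)[OF CA[OF g(1)]] g by blast
        qed
      next
        show "Domain (\<Union>C) \<subseteq> V" using goodD(2)[OF CA] by blast
      next
        fix x y assume "(x,y) \<in> \<Union>C" then show "y \<le> p x" using goodD(3)[OF CA] by blast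
      next
        fix x assume "x \<in> M" then show "(x, f x) \<in> \<Union>C" using goodD(4)[OF CA] False by blast
      next
        fix x1 y1 x2 y2 assume "(x1,y1) \<in> \<Union>C" "(x2,y2) \<in> \<Union>C"
        then obtain G1 G2 where g: "G1\<in>C" "G2\<in>C" "(x1,y1)\<in>G1" "(x2,y2)\<in>G2" by auto
        show "(x1+x2, y1+y2) \<in> \<Union>C"
        proof (cases "G1 \<subseteq> G2")
          case True then show ?thesis using goodD(5)[OF CA[OF g(2)]] g by blast
        next
          case False then have "G2 \<subseteq> G1" using ch[OF g(1,2)] by blast
          then show ?thesis using goodD(5)[OF CA[OF g(1)]] g by blast
        qed
      next
        fix c x y assume "(x,y) \<in> \<Union>C"
        then show "(c *\<^sub>R x, c*y) \<in> \<Union>C" using goodD(6)[OF CA] by blast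
      qed
      then show ?thesis by blast
    qed
  qed
  from Zorn_Lemma2[OF this] obtain G where G: "goodG V p M f G"
    and max: "\<And>G'. goodG V p M f G' \<Longrightarrow> G \<subseteq> G' \<Longrightarrow> G' = G" by blast
  note Gfun = goodD(1)[OF G] and GV = goodD(2)[OF G] and Gp = goodD(3)[OF G]
    and GM = goodD(4)[OF G] and Gadd = goodD(5)[OF G] and Gsc = goodD(6)[OF G]
  have zero: "(0, 0) \<in> G" using GM[of 0] Gsc[of 0 "f 0" 0] M by (auto simp: subspace_def)
  have dom: "Domain G = V"
  proof (rule ccontr)
    assume "Domain G \<noteq> V"
    then obtain x0 where x0V: "x0 \<in> V" and x0n: "x0 \<notin> Domain G" using GV by blast
    define L where "L = {u - p (y - x0) | y u. (y,u) \<in> G}"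
    have key: "u - p (y - x0) \<le> p (z + x0) - v" if "(y,u)\<in>G" "(z,v)\<in>G" for y u z v
    proof -
      have "u + v \<le> p (y + z)" using Gp[OF Gadd[OF that]] .
      also have "y + z = (y - x0) + (z + x0)" by simp
      also have "p \<dots> \<le> p (y - x0) + p (z + x0)"
        using GV[OF that(1)] GV[OF that(2)] x0V V padd[of "y - x0" "z + x0"] by (simp add: subspace_diff subspace_add)
      finally show ?thesis by simp
    qed
    define a where "a = Sup L"
    have L_ne: "L \<noteq> {}" using zero unfolding L_def by blast
    have L_bdd: "bdd_above L" unfolding L_def bdd_above_def using key zero by blast
    have a1: "u - p (y - x0) \<le> a" if "(y,u)\<in>G" for y u
      unfolding a_def using L_bdd that by (auto intro!: cSup_upper simp: L_def)
    have a2: "a \<le> p (z + x0) - v" if "(z,v)\<in>G" for z v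
      unfolding a_def using L_ne that key by (auto intro!: cSup_least simp: L_def)
    define G' where "G' = {(y + t *\<^sub>R x0, u + t * a) | y u t. (y,u) \<in> G}"
    have G'I: "(y + t *\<^sub>R x0, u + t * a) \<in> G'" if "(y,u) \<in> G" for y u t
      unfolding G'_def using that by blast
    have uniq: "t1 = t2 \<and> y1 = y2" if "(y1,u1)\<in>G" "(y2,u2)\<in>G" "y1 + t1 *\<^sub>R x0 = y2 + t2 *\<^sub>R x0" for y1 u1 y2 u2 t1 t2
    proof -
      have d: "(y2 - y1, u2 - u1) \<in> G" using Gadd[OF that(2) Gsc[OF that(1), of "-1"]] by simp
      have "(t1 - t2) *\<^sub>R x0 = y2 - y1" using that(3) by (simp add: algebra_simps)
      show ?thesis
      proof (cases "t1 = t2")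
        case True then show ?thesis using that(3) by simp
      next
        case False
        have "x0 = inverse (t1-t2) *\<^sub>R ((t1 - t2) *\<^sub>R x0)" using False by simp
        then have "x0 = inverse (t1-t2) *\<^sub>R (y2 - y1)"
          using \<open>(t1 - t2) *\<^sub>R x0 = y2 - y1\<close> by simp
        then have "x0 \<in> Domain G" using Gsc[OF d, of "inverse (t1-t2)"] by (auto intro: Domain.DomainI)
        then show ?thesis using x0n by blast
      qed
    qed
    have good': "goodG V p M f G'"
      unfolding goodG_def
    proof (intro conjI allI impI ballI)
      fix x y1 y2 assume "(x,y1) \<in> G'" "(x,y2) \<in> G'"
      then obtain z1 u1 t1 z2 u2 t2 where "(z1,u1)\<in>G" "(z2,u2)\<in>G" "x = z1 + t1 *\<^sub>R x0" "x = z2 + t2 *\<^sub>R x0"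
        "y1 = u1 + t1 * a" "y2 = u2 + t2 * a" unfolding G'_def by blast
      then show "y1 = y2" using uniq Gfun by metis
    next
      show "Domain G' \<subseteq> V"
        unfolding G'_def using GV x0V V by (auto intro!: subspace_add subspace_scale)
    next
      fix x y assume "(x,y) \<in> G'"
      then obtain z u t where zu: "(z,u)\<in>G" and xy: "x = z + t *\<^sub>R x0" "y = u + t * a" unfolding G'_def by blast
      have zV: "z \<in> V" using GV zu by blast
      show "y \<le> p x"
      proof (cases t "0::real" rule: linorder_cases)
        case equal then show ?thesis using Gp zu xy by simp
      next
        case greater
        have "(inverse t *\<^sub>R z, inverse t * u) \<in> G" using Gsc zu by blast
        from a2[OF this] have "a \<le> p (inverse t *\<^sub>R z + x0) - inverse t * u" .
        then have "t * a \<le> t * p (inverse t *\<^sub>R z + x0) - u" using greater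
          by (simp add: field_simps)
        also have "t * p (inverse t *\<^sub>R z + x0) = p (t *\<^sub>R (inverse t *\<^sub>R z + x0))"
          using pscale[of "inverse t *\<^sub>R z + x0" t] greater zV x0V V
          by (simp add: subspace_add subspace_scale)
        also have "t *\<^sub>R (inverse t *\<^sub>R z + x0) = z + t *\<^sub>R x0"
          using greater by (simp add: scaleR_add_right)
        finally show ?thesis using xy by simp
      next
        case less
        define r where "r = - t"
        have r: "r > 0" using less r_def by simp
        have "(inverse r *\<^sub>R z, inverse r * u) \<in> G" using Gsc zu by blast
        from a1[OF this] have "inverse r * u - p (inverse r *\<^sub>R z - x0) \<le> a" .
        then have "u - r * p (inverse r *\<^sub>R z - x0) \<le> r * a" using r
          by (simp add: field_simps)
        also have "r * p (inverse r *\<^sub>R z - x0) = p (r *\<^sub>R (inverse r *\<^sub>R z - x0))"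
          using pscale[of "inverse r *\<^sub>R z - x0" r] r zV x0V V
          by (simp add: subspace_diff subspace_scale)
        also have "r *\<^sub>R (inverse r *\<^sub>R z - x0) = z + t *\<^sub>R x0"
          using r by (simp add: scaleR_diff_right r_def)
        finally show ?thesis using xy r_def by simp
      qed
    next
      fix x assume "x \<in> M" then show "(x, f x) \<in> G'"
        unfolding G'_def using GM by force
    next
      fix x1 y1 x2 y2 assume "(x1,y1) \<in> G'" "(x2,y2) \<in> G'"
      then obtain z1 u1 t1 z2 u2 t2 where "(z1,u1)\<in>G" "(z2,u2)\<in>G" "x1 = z1 + t1 *\<^sub>R x0" "x2 = z2 + t2 *\<^sub>R x0"
        "y1 = u1 + t1 * a" "y2 = u2 + t2 * a" unfolding G'_def by blast
      then have "(x1+x2, y1+y2) = ((z1+z2) + (t1+t2) *\<^sub>R x0, (u1+u2) + (t1+t2)*a)"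
        by (simp add: algebra_simps scaleR_add_left)
      then show "(x1+x2, y1+y2) \<in> G'" using G'I[OF Gadd] \<open>(z1,u1)\<in>G\<close> \<open>(z2,u2)\<in>G\<close> by metis
    next
      fix c x y assume "(x,y) \<in> G'"
      then obtain z u t where "(z,u)\<in>G" "x = z + t *\<^sub>R x0" "y = u + t * a" unfolding G'_def by blast
      then have "(c *\<^sub>R x, c*y) = (c *\<^sub>R z + (c*t) *\<^sub>R x0, c*u + (c*t)*a)"
        by (simp add: algebra_simps scaleR_add_right)
      then show "(c *\<^sub>R x, c*y) \<in> G'" using G'I[OF Gsc] \<open>(z,u)\<in>G\<close> by metis
    qed
    have "G \<subseteq> G'" unfolding G'_def by force
    moreover have "(x0, a) \<in> G'" unfolding G'_def using zero by force
    ultimately show False using max[OF good'] x0n by blast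
  qed
  define g where "g x = (THE y. (x,y) \<in> G)" for x
  have gG: "(x, g x) \<in> G" if xV: "x \<in> V" for x
  proof -
    obtain y where "(x,y)\<in>G" using xV dom by blast
    then show ?thesis unfolding g_def using Gfun by (metis theI)
  qed
  have gval: "g x = y" if "(x,y) \<in> G" for x y
    using gG[OF GV[OF that]] that Gfun by blast
  show ?thesis
  proof (intro exI[of _ g] conjI ballI allI)
    fix x y assume "x\<in>V" "y\<in>V" then show "g (x+y) = g x + g y"
      using gval Gadd gG by blast
  next
    fix c x assume "x\<in>V" then show "g (c *\<^sub>R x) = c * g x"
      using gval Gsc gG by blast
  next
    fix x assume "x\<in>M" then show "g x = f x" using gval GM by blast
  next
    fix x assume "x\<in>V" then show "g x \<le> p x" using gG Gp by blast
  qed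
qed




lemma istop_FK:
  fixes X :: "'a::minus set" and s :: "'i \<Rightarrow> 'a \<Rightarrow> real"
  shows "istopology (\<lambda>U. U \<subseteq> X \<and>
      (\<forall>x\<in>U. \<exists>F e. finite F \<and> e > 0 \<and> {y\<in>X. \<forall>i\<in>F. s i (y - x) < e} \<subseteq> U))"
  unfolding istopology_def
proof (rule conjI; intro allI impI)
  fix S T
  assume S: "S \<subseteq> X \<and> (\<forall>x\<in>S. \<exists>F e. finite F \<and> e > 0 \<and> {y\<in>X. \<forall>i\<in>F. s i (y - x) < e} \<subseteq> S)"
    and T: "T \<subseteq> X \<and> (\<forall>x\<in>T. \<exists>F e. finite F \<and> e > 0 \<and> {y\<in>X. \<forall>i\<in>F. s i (y - x) < e} \<subseteq> T)"
  show "S \<inter> T \<subseteq> X \<and> (\<forall>x\<in>S \<inter> T. \<exists>F e. finite F \<and> e > 0 \<and> {y\<in>X. \<forall>i\<in>F. s i (y - x) < e} \<subseteq> S \<inter> T)"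
  proof (intro conjI ballI)
    show "S \<inter> T \<subseteq> X" using S by blast
    fix x assume "x \<in> S \<inter> T"
    then obtain F1 e1 F2 e2 where 1: "finite F1" "e1 > 0" "{y\<in>X. \<forall>i\<in>F1. s i (y - x) < e1} \<subseteq> S"
      and 2: "finite F2" "e2 > 0" "{y\<in>X. \<forall>i\<in>F2. s i (y - x) < e2} \<subseteq> T"
      using S T by blast
    show "\<exists>F e. finite F \<and> e > 0 \<and> {y\<in>X. \<forall>i\<in>F. s i (y - x) < e} \<subseteq> S \<inter> T"
      apply (rule exI[of _ "F1 \<union> F2"], rule exI[of _ "min e1 e2"])
      using 1 2 by (auto simp: subset_eq)
  qed
next
  fix K :: "'a set set"
  assume "\<forall>U\<in>K. U \<subseteq> X \<and> (\<forall>x\<in>U. \<exists>F e. finite F \<and> e > 0 \<and> {y\<in>X. \<forall>i\<in>F. s i (y - x) < e} \<subseteq> U)"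
  then show "\<Union>K \<subseteq> X \<and> (\<forall>x\<in>\<Union>K. \<exists>F e. finite F \<and> e > 0 \<and> {y\<in>X. \<forall>i\<in>F. s i (y - x) < e} \<subseteq> \<Union>K)"
  proof (intro conjI ballI)
    show "\<Union>K \<subseteq> X" using \<open>\<forall>U\<in>K. _\<close> by blast
    fix x assume "x \<in> \<Union>K"
    then obtain U where U: "U \<in> K" "x \<in> U" by blast
    then obtain F e where "finite F" "e > 0" "{y\<in>X. \<forall>i\<in>F. s i (y - x) < e} \<subseteq> U"
      using \<open>\<forall>U\<in>K. _\<close> by meson
    then show "\<exists>F e. finite F \<and> e > 0 \<and> {y\<in>X. \<forall>i\<in>F. s i (y - x) < e} \<subseteq> \<Union>K"
      using U by blast
  qed
qed

lemma openin_FK: "openin (FKtop X s) U \<longleftrightarrow> U \<subseteq> X \<and>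
      (\<forall>x\<in>U. \<exists>F e. finite F \<and> e > 0 \<and> {y\<in>X. \<forall>i\<in>F. s i (y - x) < e} \<subseteq> U)"
  unfolding FKtop_def using istop_FK[of X s] by simp

lemma topspace_FK: "topspace (FKtop X s) = X"
proof -
  have "openin (FKtop X s) X" unfolding openin_FK
    by (intro conjI ballI subset_refl exI[of _ "{}"] exI[of _ "1::real"]) auto
  then have "X \<subseteq> topspace (FKtop X s)" by (rule openin_subset)
  moreover have "topspace (FKtop X s) \<subseteq> X"
    using openin_topspace[of "FKtop X s"] unfolding openin_FK by blast
  ultimately show ?thesis by blast
qed

definition semi :: "seqc set \<Rightarrow> ('i \<Rightarrow> seqc \<Rightarrow> real) \<Rightarrow> bool" where
  "semi X s \<longleftrightarrow> 0 \<in> X \<and> (\<forall>x\<in>X. \<forall>y\<in>X. x + y \<in> X) \<and> (\<forall>c. \<forall>x\<in>X. (\<lambda>j. c * x j) \<in> X) \<and>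
     (\<forall>i. \<forall>x\<in>X. s i x \<ge> 0) \<and>
     (\<forall>i. \<forall>x\<in>X. \<forall>y\<in>X. s i (x + y) \<le> s i x + s i y) \<and>
     (\<forall>i c. \<forall>x\<in>X. s i (\<lambda>j. c * x j) = cmod c * s i x)"

lemma FK_semi: "FK_space X s \<Longrightarrow> semi X s"
  unfolding FK_space_def semi_def by (elim conjE) (intro conjI; assumption)

context
  fixes X :: "seqc set" and s :: "'i \<Rightarrow> seqc \<Rightarrow> real"
  assumes S: "semi X s"
begin

lemma S0: "0 \<in> X" using S unfolding semi_def by blast
lemma Sadd: "x \<in> X \<Longrightarrow> y \<in> X \<Longrightarrow> x + y \<in> X" using S unfolding semi_def by blast
lemma Ssc: "x \<in> X \<Longrightarrow> (\<lambda>j. c * x j) \<in> X" using S unfolding semi_def by blast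
lemma Snn: "x \<in> X \<Longrightarrow> s i x \<ge> 0" using S unfolding semi_def by blast
lemma Ssub: "x \<in> X \<Longrightarrow> y \<in> X \<Longrightarrow> s i (x + y) \<le> s i x + s i y" using S unfolding semi_def by blast
lemma Shom: "x \<in> X \<Longrightarrow> s i (\<lambda>j. c * x j) = cmod c * s i x" using S unfolding semi_def by blast

lemma Sneg: "x \<in> X \<Longrightarrow> - x \<in> X"
proof -
  assume x: "x \<in> X"
  have "(\<lambda>j. (-1) * x j) = - x" by (rule ext) simp
  then show ?thesis using Ssc[OF x, of "-1"] by simp
qed
lemma Sdiff: "x \<in> X \<Longrightarrow> y \<in> X \<Longrightarrow> x - y \<in> X"
proof -
  assume "x \<in> X" "y \<in> X"
  then have "x + (- y) \<in> X" using Sadd Sneg by blast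
  then show ?thesis by (metis diff_conv_add_uminus)
qed
lemma Szero: "s i 0 = 0"
proof -
  have "(\<lambda>j. (0::complex) * (0::seqc) j) = 0" by (rule ext) simp
  then show ?thesis using Shom[OF S0, of i 0] by simp
qed
lemma Sneg_eq: "x \<in> X \<Longrightarrow> s i (- x) = s i x"
proof -
  assume x: "x \<in> X"
  have "(\<lambda>j. (-1) * x j) = - x" by (rule ext) simp
  then show ?thesis using Shom[OF x, of i "-1"] by simp
qed
lemma Stri: "x \<in> X \<Longrightarrow> y \<in> X \<Longrightarrow> z \<in> X \<Longrightarrow> s i (x - z) \<le> s i (x - y) + s i (y - z)"
proof -
  assume xyz: "x \<in> X" "y \<in> X" "z \<in> X"
  have "x - z = (x - y) + (y - z)" by simp
  then show ?thesis using Ssub[OF Sdiff[OF xyz(1,2)] Sdiff[OF xyz(2,3)], of i] by simp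
qed

lemma ball_open:
  assumes x: "x \<in> X" and e: "e > 0"
  shows "openin (FKtop X s) {y\<in>X. s i (y - x) < e}"
  unfolding openin_FK
proof (intro conjI ballI)
  show "{y\<in>X. s i (y - x) < e} \<subseteq> X" by blast
  fix z assume z: "z \<in> {y\<in>X. s i (y - x) < e}"
  have sub: "{y\<in>X. \<forall>i'\<in>{i}. s i' (y - z) < e - s i (z - x)} \<subseteq> {y\<in>X. s i (y - x) < e}"
  proof
    fix y assume "y \<in> {y\<in>X. \<forall>i'\<in>{i}. s i' (y - z) < e - s i (z - x)}"
    then have y: "y \<in> X" "s i (y - z) < e - s i (z - x)" by auto
    have "s i (y - x) \<le> s i (y - z) + s i (z - x)" using Stri[OF y(1) _ x, of z] z by blast
    then show "y \<in> {y\<in>X. s i (y - x) < e}" using y by simp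
  qed
  show "\<exists>F e'. finite F \<and> e' > 0 \<and> {y\<in>X. \<forall>i\<in>F. s i (y - z) < e'} \<subseteq> {y\<in>X. s i (y - x) < e}"
    apply (rule exI[of _ "{i}"], rule exI[of _ "e - s i (z - x)"])
    using z sub by auto
qed

lemma limitin_FK:
  assumes u: "\<And>n. u n \<in> X"
  shows "limitin (FKtop X s) u x sequentially \<longleftrightarrow>
     x \<in> X \<and> (\<forall>i e. e > 0 \<longrightarrow> eventually (\<lambda>n. s i (u n - x) < e) sequentially)"
proof
  assume L: "limitin (FKtop X s) u x sequentially"
  then have x: "x \<in> X" unfolding limitin_def topspace_FK by blast
  show "x \<in> X \<and> (\<forall>i e. e > 0 \<longrightarrow> eventually (\<lambda>n. s i (u n - x) < e) sequentially)"
  proof (intro conjI allI impI x)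
    fix i and e :: real assume e: "e > 0"
    have "x \<in> {y\<in>X. s i (y - x) < e}" using x e Szero by simp
    then have "eventually (\<lambda>n. u n \<in> {y\<in>X. s i (y - x) < e}) sequentially"
      using L ball_open[OF x e, of i] unfolding limitin_def by blast
    then show "eventually (\<lambda>n. s i (u n - x) < e) sequentially" by (simp add: eventually_mono)
  qed
next
  assume R: "x \<in> X \<and> (\<forall>i e. e > 0 \<longrightarrow> eventually (\<lambda>n. s i (u n - x) < e) sequentially)"
  show "limitin (FKtop X s) u x sequentially"
    unfolding limitin_def topspace_FK
  proof (intro conjI allI impI)
    show "x \<in> X" using R by blast
    fix U assume "openin (FKtop X s) U \<and> x \<in> U"
    then obtain F e where F: "finite F" "e > 0" "{y\<in>X. \<forall>i\<in>F. s i (y - x) < e} \<subseteq> U"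
      unfolding openin_FK by blast
    have "eventually (\<lambda>n. \<forall>i\<in>F. s i (u n - x) < e) sequentially"
      using F(1) R F(2) by (simp add: eventually_ball_finite)
    then show "eventually (\<lambda>n. u n \<in> U) sequentially"
      by (rule eventually_mono) (use u F(3) in blast)
  qed
qed

lemma bound_cont:
  assumes add: "\<forall>x\<in>X. \<forall>y\<in>X. f (x + y) = f x + f y"
    and F: "finite F"
    and B: "\<forall>y\<in>X. cmod (f y) \<le> C * (\<Sum>i\<in>F. s (h i) y)"
  shows "continuous_map (FKtop X s) euclidean f"
  unfolding continuous_map topspace_FK
proof (intro conjI allI impI)
  show "f ` X \<subseteq> topspace euclidean" by simp
  fix U :: "complex set" assume "openin euclidean U"
  then have U: "open U" by simp
  show "openin (FKtop X s) {x \<in> X. f x \<in> U}"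
    unfolding openin_FK
  proof (intro conjI ballI)
    show "{x \<in> X. f x \<in> U} \<subseteq> X" by blast
    fix x assume xU: "x \<in> {x \<in> X. f x \<in> U}"
    then have x: "x \<in> X" and fxU: "f x \<in> U" by auto
    obtain r where r: "r > 0" "ball (f x) r \<subseteq> U" using U fxU open_contains_ball by blast
    define K where "K = \<bar>C\<bar> * real (card F) + 1"
    have "\<bar>C\<bar> * real (card F) \<ge> 0" by simp
    then have K: "K > 0" unfolding K_def by linarith
    define e where "e = r / K"
    have e: "e > 0" unfolding e_def using r K by simp
    have sub: "{y\<in>X. \<forall>i\<in>h ` F. s i (y - x) < e} \<subseteq> {x \<in> X. f x \<in> U}"
    proof
      fix y assume "y \<in> {y\<in>X. \<forall>i\<in>h ` F. s i (y - x) < e}"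
      then have y: "y \<in> X" and ys: "\<And>i. i \<in> F \<Longrightarrow> s (h i) (y - x) < e" by auto
      have yx: "y - x \<in> X" using Sdiff[OF y x] .
      have "f y = f (y - x) + f x" using add yx x by (metis diff_add_cancel)
      then have eq: "f y - f x = f (y - x)" by simp
      have sum_le: "(\<Sum>i\<in>F. s (h i) (y - x)) \<le> real (card F) * e"
        using sum_bounded_above[of F "\<lambda>i. s (h i) (y - x)" e] ys by (simp add: less_imp_le)
      have sum_nn: "(\<Sum>i\<in>F. s (h i) (y - x)) \<ge> 0" using Snn[OF yx] by (simp add: sum_nonneg)
      have "cmod (f (y - x)) \<le> C * (\<Sum>i\<in>F. s (h i) (y - x))" using B yx by blast
      also have "\<dots> \<le> \<bar>C\<bar> * (\<Sum>i\<in>F. s (h i) (y - x))"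
        using sum_nn by (simp add: mult_right_mono)
      also have "\<dots> \<le> \<bar>C\<bar> * (real (card F) * e)"
        using sum_le by (simp add: mult_left_mono)
      also have "\<dots> < K * e" unfolding K_def using e by (simp add: algebra_simps)
      also have "K * e = r" unfolding e_def using K by simp
      finally have "cmod (f y - f x) < r" using eq by simp
      then have "f y \<in> ball (f x) r" by (simp add: dist_norm norm_minus_commute)
      then show "y \<in> {x \<in> X. f x \<in> U}" using r y by blast
    qed
    show "\<exists>F e. finite F \<and> e > 0 \<and> {y\<in>X. \<forall>i\<in>F. s i (y - x) < e} \<subseteq> {x \<in> X. f x \<in> U}"
      apply (rule exI[of _ "h ` F"], rule exI[of _ e])
      using F e sub by auto
  qed
qed

lemma cont_bound:
  assumes hom: "\<forall>c. \<forall>x\<in>X. f (\<lambda>j. c * x j) = c * f x"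
    and cont: "continuous_map (FKtop X s) euclidean f"
  shows "\<exists>F C. finite F \<and> C \<ge> 0 \<and> (\<forall>y\<in>X. cmod (f y) \<le> C * (\<Sum>i\<in>F. s i y))"
proof -
  have "openin (FKtop X s) {x \<in> topspace (FKtop X s). f x \<in> ball 0 1}"
    using openin_continuous_map_preimage[OF cont, of "ball 0 1"] by simp
  then have op: "openin (FKtop X s) {x \<in> X. f x \<in> ball 0 1}" by (simp add: topspace_FK)
  have z: "(\<lambda>j. (0::complex) * (0::seqc) j) = 0" by (rule ext) simp
  have f0: "f 0 = 0" using hom S0 z by (metis mult_zero_left)
  have "0 \<in> {x \<in> X. f x \<in> ball 0 1}" using S0 f0 by simp
  then obtain F e where F: "finite F" "e > 0" and sub: "{y\<in>X. \<forall>i\<in>F. s i (y - 0) < e} \<subseteq> {x \<in> X. f x \<in> ball 0 1}"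
    using op unfolding openin_FK by blast
  have key: "c * cmod (f y) < 1" if y: "y \<in> X" and c: "c > 0" and cs: "\<forall>i\<in>F. c * s i y < e" for y c
  proof -
    define z where "z = (\<lambda>j. complex_of_real c * y j)"
    have zX: "z \<in> X" unfolding z_def using Ssc[OF y] .
    have "s i z = c * s i y" for i unfolding z_def using Shom[OF y, of i "complex_of_real c"] c by simp
    then have "z \<in> {y\<in>X. \<forall>i\<in>F. s i (y - 0) < e}" using zX cs by simp
    then have "cmod (f z) < 1" using sub by auto
    moreover have "f z = complex_of_real c * f y" unfolding z_def using hom y by blast
    ultimately show ?thesis using c by (simp add: norm_mult)
  qed
  show ?thesis
  proof (intro exI conjI ballI)
    show "finite F" by fact
    show "2 / e \<ge> 0" using F by simp
    fix y assume y: "y \<in> X"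
    define S where "S = (\<Sum>i\<in>F. s i y)"
    have Snn': "S \<ge> 0" unfolding S_def using Snn[OF y] by (simp add: sum_nonneg)
    have le: "s i y \<le> S" if "i \<in> F" for i
      unfolding S_def using member_le_sum[of i F "\<lambda>i. s i y"] that F Snn[OF y] by simp
    show "cmod (f y) \<le> 2 / e * (\<Sum>i\<in>F. s i y)"
    proof (cases "S > 0")
      case True
      define c where "c = e / (2 * S)"
      have c: "c > 0" unfolding c_def using True F by simp
      have "\<forall>i\<in>F. c * s i y < e"
      proof
        fix i assume "i \<in> F"
        then have "c * s i y \<le> c * S" using le c by (simp add: mult_left_mono)
        also have "c * S = e / 2" unfolding c_def using True by simp
        finally show "c * s i y < e" using F by simp
      qed
      then have "c * cmod (f y) < 1" using key[OF y c] by blast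
      then have "cmod (f y) < 1 / c" using c by (simp add: field_simps)
      also have "1 / c = 2 / e * S" unfolding c_def using True F by (simp add: field_simps)
      finally show ?thesis unfolding S_def by simp
    next
      case False
      then have S0': "S = 0" using Snn' by simp
      then have si0: "\<forall>i\<in>F. s i y = 0" unfolding S_def using F Snn[OF y]
        by (simp add: sum_nonneg_eq_0_iff)
      have "cmod (f y) = 0"
      proof (rule ccontr)
        assume "cmod (f y) \<noteq> 0"
        then have pos: "cmod (f y) > 0" by simp
        have "(1 / cmod (f y)) * cmod (f y) < 1" using key[OF y, of "1 / cmod (f y)"] pos si0 F by simp
        then show False using pos by simp
      qed
      then show ?thesis unfolding S_def[symmetric] using S0' by simp
    qed
  qed
qed

end


declare scaleR_fun_apply[simp]

lemma scaleR_seqc: "c *\<^sub>R (y::seqc) = (\<lambda>j. complex_of_real c * y j)"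
  by (simp add: scaleR_fun_def scaleR_conv_of_real)

definition csc :: "complex \<Rightarrow> (nat \<Rightarrow> seqc) \<Rightarrow> (nat \<Rightarrow> seqc)" where
  "csc c z = (\<lambda>m j. c * z m j)"

lemma represent:
  fixes X :: "nat \<Rightarrow> seqc set" and s :: "nat \<Rightarrow> 'i \<Rightarrow> seqc \<Rightarrow> real"
    and f :: "seqc \<Rightarrow> complex"
  assumes SX: "\<And>m. semi (X m) (s m)"
    and Ydef: "Y = (\<Inter>m. X m)"
    and fadd: "\<forall>x\<in>Y. \<forall>y\<in>Y. f (x + y) = f x + f y"
    and fhom: "\<forall>c. \<forall>x\<in>Y. f (\<lambda>j. c * x j) = c * f x"
    and F: "finite F" and C: "C \<ge> 0"
    and B: "\<forall>y\<in>Y. cmod (f y) \<le> C * (\<Sum>i\<in>F. s (fst i) (snd i) y)"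
  shows "\<exists>A g. finite A \<and> (\<forall>m. g m \<in> FK_dual (X m) (s m)) \<and> (\<forall>y\<in>Y. f y = (\<Sum>m\<in>A. g m y))"
proof -
  have Yi: "y \<in> Y \<longleftrightarrow> (\<forall>m. y \<in> X m)" for y using Ydef by blast
  define V where "V = {z :: nat \<Rightarrow> seqc. \<forall>m. z m \<in> X m}"
  have V0: "0 \<in> V" unfolding V_def using S0[OF SX] by simp
  have Vadd: "z1 + z2 \<in> V" if "z1 \<in> V" "z2 \<in> V" for z1 z2
    using that Sadd[OF SX] unfolding V_def by simp
  have Vsc: "c *\<^sub>R z \<in> V" if "z \<in> V" for z c
    using that Ssc[OF SX] unfolding V_def by (simp add: scaleR_seqc)
  have Vcsc: "csc c z \<in> V" if "z \<in> V" for z c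
    using that Ssc[OF SX] unfolding V_def csc_def by simp
  have subV: "subspace V" unfolding subspace_def using V0 Vadd Vsc by blast
  define p where "p z = C * (\<Sum>i\<in>F. s (fst i) (snd i) (z (fst i)))" for z :: "nat \<Rightarrow> seqc"
  have padd: "p (x + y) \<le> p x + p y" if "x \<in> V" "y \<in> V" for x y
  proof -
    have "(\<Sum>i\<in>F. s (fst i) (snd i) ((x + y) (fst i))) \<le> (\<Sum>i\<in>F. s (fst i) (snd i) (x (fst i)) + s (fst i) (snd i) (y (fst i)))"
      using that Ssub[OF SX] unfolding V_def by (intro sum_mono) simp
    then show ?thesis unfolding p_def using C by (simp add: sum.distrib distrib_left[symmetric] mult_left_mono)
  qed
  have pscale: "p (c *\<^sub>R x) = c * p x" if "x \<in> V" "c \<ge> 0" for c x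
  proof -
    have "s (fst i) (snd i) ((c *\<^sub>R x) (fst i)) = c * s (fst i) (snd i) (x (fst i))" for i
      using that Shom[OF SX, of "x (fst i)" "fst i" "snd i" "complex_of_real c"] unfolding V_def
      by (simp add: scaleR_seqc)
    then show ?thesis unfolding p_def by (simp add: sum_distrib_left algebra_simps)
  qed
  have pnn: "p z \<ge> 0" if "z \<in> V" for z
    unfolding p_def using that C Snn[OF SX] unfolding V_def by (simp add: sum_nonneg)
  have pneg: "p ((-1) *\<^sub>R z) = p z" if "z \<in> V" for z
  proof -
    have "s (fst i) (snd i) (((-1) *\<^sub>R z) (fst i)) = s (fst i) (snd i) (z (fst i))" for i
      using that Sneg_eq[OF SX, of "z (fst i)" "fst i" "snd i"] unfolding V_def by simp
    then show ?thesis unfolding p_def by simp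
  qed
  have pcsc: "p (csc c z) = cmod c * p z" if "z \<in> V" for z c
  proof -
    have "s (fst i) (snd i) ((csc c z) (fst i)) = cmod c * s (fst i) (snd i) (z (fst i))" for i
      using that Shom[OF SX, of "z (fst i)" "fst i" "snd i" c] unfolding V_def csc_def by simp
    then show ?thesis unfolding p_def by (simp add: sum_distrib_left algebra_simps)
  qed
  define diag where "diag y = (\<lambda>m::nat. y)" for y :: seqc
  define M where "M = diag ` Y"
  have Y0: "0 \<in> Y" using S0[OF SX] Yi by blast
  have Yadd: "x + y \<in> Y" if "x \<in> Y" "y \<in> Y" for x y using that Sadd[OF SX] Yi by blast
  have Ysc: "(\<lambda>j. c * y j) \<in> Y" if "y \<in> Y" for y c using that Ssc[OF SX] Yi by blast
  have MV: "M \<subseteq> V" unfolding M_def V_def diag_def using Yi by auto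
  have subM: "subspace M" unfolding subspace_def M_def
  proof (intro conjI ballI allI)
    show "0 \<in> diag ` Y" using Y0 by (auto simp: diag_def image_iff fun_eq_iff intro!: bexI[of _ 0])
    fix x y assume "x \<in> diag ` Y" "y \<in> diag ` Y"
    then obtain a b where "a \<in> Y" "b \<in> Y" "x = diag a" "y = diag b" by blast
    then show "x + y \<in> diag ` Y" using Yadd by (auto simp: diag_def image_iff fun_eq_iff intro!: bexI[of _ "a + b"])
  next
    fix c x assume "x \<in> diag ` Y"
    then obtain a where "a \<in> Y" "x = diag a" by blast
    then show "c *\<^sub>R x \<in> diag ` Y" using Ysc
      by (auto simp: diag_def image_iff fun_eq_iff scaleR_seqc intro!: bexI[of _ "\<lambda>j. complex_of_real c * a j"])
  qed
  define phi where "phi z = Re (f (z 0))" for z :: "nat \<Rightarrow> seqc"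
  have phiadd: "phi (x + y) = phi x + phi y" if "x \<in> M" "y \<in> M" for x y
    using that fadd unfolding M_def phi_def diag_def by auto
  have phisc: "phi (c *\<^sub>R x) = c * phi x" if "x \<in> M" for c x
    using that fhom unfolding M_def phi_def diag_def by (auto simp: scaleR_seqc)
  have phip: "phi x \<le> p x" if xM: "x \<in> M" for x
  proof -
    obtain y where y: "y \<in> Y" "x = diag y" using xM unfolding M_def by blast
    have "phi x \<le> cmod (f y)" unfolding phi_def y diag_def by (rule complex_Re_le_cmod)
    also have "\<dots> \<le> p x" using B y unfolding p_def diag_def by simp
    finally show ?thesis .
  qed
  obtain g where gadd: "\<forall>x\<in>V. \<forall>y\<in>V. g (x+y) = g x + g y" and gsc: "\<forall>c. \<forall>x\<in>V. g (c *\<^sub>R x) = c * g x"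
    and gphi: "\<forall>x\<in>M. g x = phi x" and gp: "\<forall>x\<in>V. g x \<le> p x"
  proof -
    have "\<exists>g. (\<forall>x\<in>V. \<forall>y\<in>V. g (x+y) = g x + g y) \<and> (\<forall>c. \<forall>x\<in>V. g (c *\<^sub>R x) = c * g x)
           \<and> (\<forall>x\<in>M. g x = phi x) \<and> (\<forall>x\<in>V. g x \<le> p x)"
    proof (rule HB_real)
      show "subspace V" by (rule subV)
      show "\<And>x y. x \<in> V \<Longrightarrow> y \<in> V \<Longrightarrow> p (x + y) \<le> p x + p y" by (rule padd)
      show "\<And>c x. x \<in> V \<Longrightarrow> 0 \<le> c \<Longrightarrow> p (c *\<^sub>R x) = c * p x" by (rule pscale)
      show "subspace M" by (rule subM)
      show "M \<subseteq> V" by (rule MV)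
      show "\<And>x y. x \<in> M \<Longrightarrow> y \<in> M \<Longrightarrow> phi (x + y) = phi x + phi y" by (rule phiadd)
      show "\<And>c x. x \<in> M \<Longrightarrow> phi (c *\<^sub>R x) = c * phi x" by (rule phisc)
      show "\<And>x. x \<in> M \<Longrightarrow> phi x \<le> p x" by (rule phip)
    qed
    then show ?thesis using that by blast
  qed
  have gabs: "\<bar>g z\<bar> \<le> p z" if "z \<in> V" for z
  proof -
    have h: "g ((-1) *\<^sub>R z) = (-1) * g z" using gsc that by blast
    have "- g z = g ((-1) *\<^sub>R z)" using h by simp
    also have "\<dots> \<le> p ((-1) *\<^sub>R z)" using gp Vsc that by blast
    also have "\<dots> = p z" using pneg that by simp
    finally show ?thesis using gp that by (simp add: abs_le_iff)
  qed
  define G where "G z = Complex (g z) (- g (csc \<i> z))" for z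
  have Gadd: "G (x + y) = G x + G y" if "x \<in> V" "y \<in> V" for x y
  proof -
    have "csc \<i> (x + y) = csc \<i> x + csc \<i> y" unfolding csc_def by (simp add: fun_eq_iff distrib_left)
    then show ?thesis unfolding G_def using gadd that Vcsc by (simp add: complex_eq_iff)
  qed
  have Gsc: "G (csc c z) = c * G z" if z: "z \<in> V" for c z
  proof -
    have e1: "csc c z = Re c *\<^sub>R z + Im c *\<^sub>R csc \<i> z"
      unfolding csc_def by (simp add: fun_eq_iff scaleR_seqc complex_eq_iff)
    have e2: "csc \<i> (csc c z) = Re c *\<^sub>R csc \<i> z + (- Im c) *\<^sub>R z"
      unfolding csc_def by (simp add: fun_eq_iff scaleR_seqc complex_eq_iff)
    have g1: "g (csc c z) = Re c * g z + Im c * g (csc \<i> z)"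
      unfolding e1 using gadd gsc Vsc Vcsc z by simp
    have a1: "Re c *\<^sub>R csc \<i> z \<in> V" "(- Im c) *\<^sub>R z \<in> V" using Vsc Vcsc z by blast+
    have "g (csc \<i> (csc c z)) = g (Re c *\<^sub>R csc \<i> z) + g ((- Im c) *\<^sub>R z)"
      unfolding e2 using gadd a1 by blast
    also have "\<dots> = Re c * g (csc \<i> z) + (- Im c) * g z"
    proof -
      have "g (Re c *\<^sub>R csc \<i> z) = Re c * g (csc \<i> z)" using gsc Vcsc z by blast
      moreover have "g ((- Im c) *\<^sub>R z) = (- Im c) * g z" using gsc z by blast
      ultimately show ?thesis by (simp only:)
    qed
    finally have g2: "g (csc \<i> (csc c z)) = Re c * g (csc \<i> z) - Im c * g z" by simp
    show ?thesis unfolding G_def using g1 g2 by (simp add: complex_eq_iff)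
  qed
  have Gbound: "cmod (G z) \<le> 2 * p z" if z: "z \<in> V" for z
  proof -
    have "cmod (G z) \<le> \<bar>g z\<bar> + \<bar>g (csc \<i> z)\<bar>" unfolding G_def using cmod_le[of "Complex (g z) (- g (csc \<i> z))"] by simp
    also have "\<dots> \<le> p z + p (csc \<i> z)" using gabs z Vcsc by (simp add: add_mono)
    also have "p (csc \<i> z) = p z" using pcsc z by simp
    finally show ?thesis by simp
  qed
  define del where "del m y = (\<lambda>m'. if m' = m then y else 0)" for m :: nat and y :: seqc
  have delV: "del m y \<in> V" if "y \<in> X m" for m y
    using that S0[OF SX] unfolding V_def del_def by simp
  define gm where "gm m y = G (del m y)" for m y
  have gm_dual: "gm m \<in> FK_dual (X m) (s m)" for m
  proof -
    have add: "\<forall>x\<in>X m. \<forall>y\<in>X m. gm m (x + y) = gm m x + gm m y"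
    proof (intro ballI)
      fix x y assume "x \<in> X m" "y \<in> X m"
      moreover have "del m (x + y) = del m x + del m y" unfolding del_def by (simp add: fun_eq_iff)
      ultimately show "gm m (x + y) = gm m x + gm m y" unfolding gm_def using Gadd delV by simp
    qed
    have hom: "\<forall>c. \<forall>x\<in>X m. gm m (\<lambda>j. c * x j) = c * gm m x"
    proof (intro allI ballI)
      fix c x assume "x \<in> X m"
      moreover have "del m (\<lambda>j. c * x j) = csc c (del m x)" unfolding del_def csc_def by (simp add: fun_eq_iff)
      ultimately show "gm m (\<lambda>j. c * x j) = c * gm m x" unfolding gm_def using Gsc delV by simp
    qed
    have bnd: "\<forall>y\<in>X m. cmod (gm m y) \<le> (2 * C) * (\<Sum>i\<in>{i\<in>F. fst i = m}. s m (snd i) y)"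
    proof
      fix y assume y: "y \<in> X m"
      have "p (del m y) = C * (\<Sum>i\<in>F. if fst i = m then s m (snd i) y else 0)"
        unfolding p_def del_def by (intro arg_cong[where f="\<lambda>t. C * t"] sum.cong) (auto simp: Szero[OF SX])
      also have "\<dots> = C * (\<Sum>i\<in>{i\<in>F. fst i = m}. s m (snd i) y)"
        using F by (simp add: sum.inter_filter)
      finally show "cmod (gm m y) \<le> (2 * C) * (\<Sum>i\<in>{i\<in>F. fst i = m}. s m (snd i) y)"
        unfolding gm_def using Gbound[OF delV[OF y]] by simp
    qed
    have "continuous_map (FKtop (X m) (s m)) euclidean (gm m)"
      using bound_cont[OF SX add _ bnd] F by simp
    then show ?thesis unfolding FK_dual_def using add hom by blast
  qed
  define A where "A = fst ` F"
  have finA: "finite A" unfolding A_def using F by simp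
  have rep: "f y = (\<Sum>m\<in>A. gm m y)" if y: "y \<in> Y" for y
  proof -
    define w where "w B = (\<lambda>m::nat. if m \<in> B then y else 0)" for B
    have wV: "w B \<in> V" for B using y Yi S0[OF SX] unfolding w_def V_def by simp
    have G0: "G 0 = 0" using Gadd[OF V0 V0] by simp
    have wsum: "finite B \<Longrightarrow> G (w B) = (\<Sum>m\<in>B. gm m y)" for B
    proof (induction B rule: finite_induct)
      case empty
      have w0: "w {} = 0" unfolding w_def by (simp add: fun_eq_iff)
      show ?case by (simp only: sum.empty w0 G0)
    next
      case (insert a B)
      have "w (insert a B) = del a y + w B" unfolding w_def del_def using insert(2) by (auto simp: fun_eq_iff)
      then have "G (w (insert a B)) = G (del a y) + G (w B)"
        using Gadd delV wV y Yi by simp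
      then show ?case using insert by (simp add: gm_def)
    qed
    define r where "r = (\<lambda>m. if m \<in> A then 0 else y)"
    have rV: "r \<in> V" using y Yi S0[OF SX] unfolding r_def V_def by simp
    have "(\<Sum>i\<in>F. s (fst i) (snd i) (r (fst i))) = 0"
    proof (rule sum.neutral, rule ballI)
      fix i assume "i \<in> F"
      then have "fst i \<in> A" unfolding A_def by blast
      then show "s (fst i) (snd i) (r (fst i)) = 0" unfolding r_def using Szero[OF SX] by simp
    qed
    then have pr: "p r = 0" unfolding p_def by simp
    have Gr: "G r = 0" using Gbound[OF rV] pr by simp
    have "diag y = w A + r" unfolding diag_def w_def r_def by (simp add: fun_eq_iff)
    then have "G (diag y) = G (w A)" using Gadd[OF wV rV] Gr by simp
    also have "\<dots> = (\<Sum>m\<in>A. gm m y)" using wsum finA by simp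
    finally have 1: "G (diag y) = (\<Sum>m\<in>A. gm m y)" .
    have dM: "diag y \<in> M" unfolding M_def using y by blast
    have "csc \<i> (diag y) = diag (\<lambda>j. \<i> * y j)" unfolding csc_def diag_def by simp
    then have dM2: "csc \<i> (diag y) \<in> M" unfolding M_def using Ysc[OF y] by simp
    have "g (diag y) = Re (f y)" using gphi dM unfolding phi_def diag_def by simp
    moreover have "g (csc \<i> (diag y)) = Re (f (\<lambda>j. \<i> * y j))"
      using gphi dM2 unfolding phi_def csc_def diag_def by simp
    moreover have "f (\<lambda>j. \<i> * y j) = \<i> * f y" using fhom y by blast
    ultimately have "G (diag y) = f y" unfolding G_def by (simp add: complex_eq_iff)
    then show ?thesis using 1 by simp
  qed
  show ?thesis using finA gm_dual rep by blast
qed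


lemma semi_Y:
  fixes X :: "nat \<Rightarrow> seqc set" and s :: "nat \<Rightarrow> 'i \<Rightarrow> seqc \<Rightarrow> real"
  assumes SX: "\<And>m. semi (X m) (s m)"
  shows "semi (\<Inter>m. X m) (\<lambda>(n, k). s n k)"
proof -
  let ?Y = "\<Inter>m. X m" and ?t = "\<lambda>(n, k). s n k"
  have h1: "0 \<in> ?Y" using S0[OF SX] by blast
  have h2: "\<forall>x\<in>?Y. \<forall>y\<in>?Y. x + y \<in> ?Y" using Sadd[OF SX] by blast
  have h3: "\<forall>c. \<forall>x\<in>?Y. (\<lambda>j. c * x j) \<in> ?Y" using Ssc[OF SX] by blast
  have h4: "\<forall>i. \<forall>x\<in>?Y. ?t i x \<ge> 0" using Snn[OF SX] by (auto simp: split_beta)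
  have h5: "\<forall>i. \<forall>x\<in>?Y. \<forall>y\<in>?Y. ?t i (x + y) \<le> ?t i x + ?t i y" using Ssub[OF SX] by (auto simp: split_beta)
  have h6: "\<forall>i c. \<forall>x\<in>?Y. ?t i (\<lambda>j. c * x j) = cmod c * ?t i x" using Shom[OF SX] by (auto simp: split_beta)
  show ?thesis unfolding semi_def by (intro conjI h1 h2 h3 h4 h5 h6)
qed

lemma Tmean_phi: "Tmean p q n x \<in> phi"
  unfolding phi_def mem_Collect_eq
proof (rule finite_subset[of _ "{..<q n}"])
  show "{j. Tmean p q n x j \<noteq> 0} \<subseteq> {..<q n}"
  proof
    fix j assume j: "j \<in> {j. Tmean p q n x j \<noteq> 0}"
    show "j \<in> {..<q n}"
    proof (rule ccontr)
      assume "j \<notin> {..<q n}"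
      then have "q n \<le> j" by simp
      then have "(\<Sum>k\<in>{p n<..q n}. sect k x j) = 0"
        by (intro sum.neutral) (auto simp: sect_def)
      then show False using j by (simp add: Tmean_def)
    qed
  qed
qed simp

lemma dual_restrict:
  fixes X :: "nat \<Rightarrow> seqc set" and s :: "nat \<Rightarrow> 'i \<Rightarrow> seqc \<Rightarrow> real"
  assumes SX: "\<And>m. semi (X m) (s m)"
    and g: "g \<in> FK_dual (X m) (s m)"
  shows "g \<in> FK_dual (\<Inter>m. X m) (\<lambda>(n, k). s n k)"
proof -
  have add: "\<forall>x\<in>X m. \<forall>y\<in>X m. g (x + y) = g x + g y" and hom: "\<forall>c. \<forall>x\<in>X m. g (\<lambda>j. c * x j) = c * g x"
    and cont: "continuous_map (FKtop (X m) (s m)) euclidean g"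
    using g unfolding FK_dual_def by blast+
  obtain F C where F: "finite F" and B: "\<forall>y\<in>X m. cmod (g y) \<le> C * (\<Sum>i\<in>F. s m i y)"
    using cont_bound[OF SX hom cont] by blast
  have addY: "\<forall>x\<in>(\<Inter>m. X m). \<forall>y\<in>(\<Inter>m. X m). g (x + y) = g x + g y" using add by blast
  have homY: "\<forall>c. \<forall>x\<in>(\<Inter>m. X m). g (\<lambda>j. c * x j) = c * g x" using hom by blast
  have BY: "\<forall>y\<in>(\<Inter>m. X m). cmod (g y) \<le> C * (\<Sum>i\<in>F. (\<lambda>(n, k). s n k) ((\<lambda>k. (m, k)) i) y)"
    using B by auto
  have "continuous_map (FKtop (\<Inter>m. X m) (\<lambda>(n, k). s n k)) euclidean g"
    by (rule bound_cont[OF semi_Y[OF SX] addY F BY])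
  then show ?thesis unfolding FK_dual_def using addY homY by blast
qed

lemma dual_Y:
  fixes X :: "nat \<Rightarrow> seqc set" and s :: "nat \<Rightarrow> 'i \<Rightarrow> seqc \<Rightarrow> real"
  assumes SX: "\<And>m. semi (X m) (s m)"
    and f: "f \<in> FK_dual (\<Inter>m. X m) (\<lambda>(n, k). s n k)"
  shows "\<exists>A g. finite A \<and> (\<forall>m. g m \<in> FK_dual (X m) (s m)) \<and> (\<forall>y\<in>(\<Inter>m. X m). f y = (\<Sum>m\<in>A. g m y))"
proof -
  have add: "\<forall>x\<in>(\<Inter>m. X m). \<forall>y\<in>(\<Inter>m. X m). f (x + y) = f x + f y"
    and hom: "\<forall>c. \<forall>x\<in>(\<Inter>m. X m). f (\<lambda>j. c * x j) = c * f x"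
    and cont: "continuous_map (FKtop (\<Inter>m. X m) (\<lambda>(n, k). s n k)) euclidean f"
    using f unfolding FK_dual_def by blast+
  obtain F C where F: "finite F" "C \<ge> 0" and B: "\<forall>y\<in>(\<Inter>m. X m). cmod (f y) \<le> C * (\<Sum>i\<in>F. (\<lambda>(n, k). s n k) i y)"
    using cont_bound[OF semi_Y[OF SX] hom cont] by blast
  have B': "\<forall>y\<in>(\<Inter>m. X m). cmod (f y) \<le> C * (\<Sum>i\<in>F. s (fst i) (snd i) y)"
    using B by (simp add: split_beta)
  show ?thesis by (rule represent[OF SX refl add hom F B'])
qed

lemma Bseq_add2:
  fixes f g :: "nat \<Rightarrow> complex"
  assumes "Bseq f" "Bseq g" shows "Bseq (\<lambda>n. f n + g n)"
proof -
  obtain K1 where K1: "K1 > 0" "\<And>n. norm (f n) \<le> K1" using assms(1) by (auto simp: Bseq_def)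
  obtain K2 where K2: "K2 > 0" "\<And>n. norm (g n) \<le> K2" using assms(2) by (auto simp: Bseq_def)
  have "norm (f n + g n) \<le> K1 + K2" for n using norm_triangle_le[of "f n" "g n"] K1(2)[of n] K2(2)[of n] by simp
  then show ?thesis using K1 K2 by (intro BseqI[of "K1 + K2"]) auto
qed

lemma Bseq_sum2:
  fixes X :: "nat \<Rightarrow> nat \<Rightarrow> complex"
  shows "finite A \<Longrightarrow> (\<forall>i\<in>A. Bseq (X i)) \<Longrightarrow> Bseq (\<lambda>n. \<Sum>i\<in>A. X i n)"
proof (induction A rule: finite_induct)
  case empty then show ?case by (simp add: BseqI[of 1])
next
  case (insert a A)
  then show ?case using Bseq_add2[of "X a" "\<lambda>n. \<Sum>i\<in>A. X i n"] by simp
qed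

theorem mainTheorem18:
  fixes X :: "nat \<Rightarrow> seqc set"
    and s :: "nat \<Rightarrow> 'i::countable \<Rightarrow> seqc \<Rightarrow> real"
    and p q :: "nat \<Rightarrow> nat"
  assumes FK: "\<And>n. FK_space (X n) (s n)"
    and phi: "\<And>n. phi \<subseteq> X n"
    and pq: "\<And>n. p n < q n"
    and qinf: "filterlim q at_top sequentially"
  defines "Y \<equiv> (\<Inter>n. X n)"
    and "sY \<equiv> (\<lambda>(n, k). s n k)"
  shows "DS p q Y sY = (\<Inter>n. DS p q (X n) (s n)) \<and>
         DW p q Y sY = (\<Inter>n. DW p q (X n) (s n)) \<and>
         DF p q Y sY = (\<Inter>n. DF p q (X n) (s n)) \<and>
         DB p q Y sY = (\<Inter>n. DB p q (X n) (s n))"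
proof -
  have SX: "\<And>m. semi (X m) (s m)" using FK FK_semi by blast
  have SY: "semi Y sY" unfolding Y_def sY_def by (rule semi_Y[OF SX])
  have TX: "\<And>m n x. Tmean p q n x \<in> X m" using Tmean_phi phi by blast
  have TY: "\<And>n x. Tmean p q n x \<in> Y" using TX unfolding Y_def by blast
  have restr: "\<And>m g. g \<in> FK_dual (X m) (s m) \<Longrightarrow> g \<in> FK_dual Y sY"
    unfolding Y_def sY_def by (rule dual_restrict[OF SX])
  have rep: "\<And>f. f \<in> FK_dual Y sY \<Longrightarrow> \<exists>A g. finite A \<and> (\<forall>m. g m \<in> FK_dual (X m) (s m)) \<and> (\<forall>y\<in>Y. f y = (\<Sum>m\<in>A. g m y))"
    unfolding Y_def sY_def by (rule dual_Y[OF SX])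
  have Yi: "\<And>x. x \<in> Y \<longleftrightarrow> (\<forall>m. x \<in> X m)" unfolding Y_def by blast
  have sYi: "\<And>m k. sY (m, k) = s m k" unfolding sY_def by simp
  have LY: "\<And>x. limitin (FKtop Y sY) (\<lambda>n. Tmean p q n x) x sequentially \<longleftrightarrow>
      x \<in> Y \<and> (\<forall>i e. e > 0 \<longrightarrow> eventually (\<lambda>n. sY i (Tmean p q n x - x) < e) sequentially)"
    by (rule limitin_FK[OF SY]) (rule TY)
  have LX: "\<And>x m. limitin (FKtop (X m) (s m)) (\<lambda>n. Tmean p q n x) x sequentially \<longleftrightarrow>
      x \<in> X m \<and> (\<forall>i e. e > 0 \<longrightarrow> eventually (\<lambda>n. s m i (Tmean p q n x - x) < e) sequentially)"
    by (rule limitin_FK[OF SX]) (rule TX)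
  have DS: "DS p q Y sY = (\<Inter>n. DS p q (X n) (s n))"
  proof (intro equalityI subsetI)
    fix x assume "x \<in> DS p q Y sY"
    then have x: "x \<in> Y" and lim: "limitin (FKtop Y sY) (\<lambda>n. Tmean p q n x) x sequentially"
      unfolding DS_def by blast+
    have L: "\<And>i e. e > 0 \<Longrightarrow> eventually (\<lambda>n. sY i (Tmean p q n x - x) < e) sequentially"
      using lim unfolding LY by blast
    show "x \<in> (\<Inter>n. DS p q (X n) (s n))"
    proof
      fix m
      have xm: "x \<in> X m" using x Yi by blast
      have "\<And>k e. e > 0 \<Longrightarrow> eventually (\<lambda>n. s m k (Tmean p q n x - x) < e) sequentially"
        using L[of _ "(m, _)"] unfolding sYi .
      then have "limitin (FKtop (X m) (s m)) (\<lambda>n. Tmean p q n x) x sequentially"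
        unfolding LX using xm by blast
      then show "x \<in> DS p q (X m) (s m)" unfolding DS_def using xm by blast
    qed
  next
    fix x assume "x \<in> (\<Inter>n. DS p q (X n) (s n))"
    then have xm: "\<And>m. x \<in> X m" and L: "\<And>m. limitin (FKtop (X m) (s m)) (\<lambda>n. Tmean p q n x) x sequentially"
      unfolding DS_def by blast+
    have L': "\<And>m k e. e > 0 \<Longrightarrow> eventually (\<lambda>n. s m k (Tmean p q n x - x) < e) sequentially"
      using L unfolding LX by blast
    have x: "x \<in> Y" using xm Yi by blast
    have "\<forall>i e. e > 0 \<longrightarrow> eventually (\<lambda>n. sY i (Tmean p q n x - x) < e) sequentially"
    proof (intro allI impI)
      fix i :: "nat \<times> 'i" and e :: real assume e: "e > 0"
      obtain m k where i: "i = (m, k)" by (cases i)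
      show "eventually (\<lambda>n. sY i (Tmean p q n x - x) < e) sequentially"
        unfolding i sYi using L'[OF e] .
    qed
    then have "limitin (FKtop Y sY) (\<lambda>n. Tmean p q n x) x sequentially"
      unfolding LY using x by blast
    then show "x \<in> DS p q Y sY" unfolding DS_def using x by blast
  qed
  have DW: "DW p q Y sY = (\<Inter>n. DW p q (X n) (s n))"
  proof (intro equalityI subsetI)
    fix x assume "x \<in> DW p q Y sY"
    then show "x \<in> (\<Inter>n. DW p q (X n) (s n))" unfolding DW_def using Yi restr by blast
  next
    fix x assume "x \<in> (\<Inter>n. DW p q (X n) (s n))"
    then have xm: "\<And>m. x \<in> X m" and L: "\<And>m g. g \<in> FK_dual (X m) (s m) \<Longrightarrow> (\<lambda>n. g (Tmean p q n x)) \<longlonglongrightarrow> g x"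
      unfolding DW_def by auto
    have x: "x \<in> Y" using xm Yi by blast
    have "(\<lambda>n. f (Tmean p q n x)) \<longlonglongrightarrow> f x" if f: "f \<in> FK_dual Y sY" for f
    proof -
      obtain A g where A: "finite A" "\<forall>m. g m \<in> FK_dual (X m) (s m)" "\<forall>y\<in>Y. f y = (\<Sum>m\<in>A. g m y)"
        using rep[OF f] by blast
      have "(\<lambda>n. \<Sum>m\<in>A. g m (Tmean p q n x)) \<longlonglongrightarrow> (\<Sum>m\<in>A. g m x)"
        by (intro tendsto_sum L) (use A in blast)
      then show ?thesis using A(3) x TY by simp
    qed
    then show "x \<in> DW p q Y sY" unfolding DW_def using x by blast
  qed
  have DF: "DF p q Y sY = (\<Inter>n. DF p q (X n) (s n))"
  proof (intro equalityI subsetI)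
    fix x assume "x \<in> DF p q Y sY"
    then show "x \<in> (\<Inter>n. DF p q (X n) (s n))" unfolding DF_def using Yi restr by blast
  next
    fix x assume "x \<in> (\<Inter>n. DF p q (X n) (s n))"
    then have xm: "\<And>m. x \<in> X m" and L: "\<And>m g. g \<in> FK_dual (X m) (s m) \<Longrightarrow> convergent (\<lambda>n. g (Tmean p q n x))"
      unfolding DF_def by auto
    have x: "x \<in> Y" using xm Yi by blast
    have "convergent (\<lambda>n. f (Tmean p q n x))" if f: "f \<in> FK_dual Y sY" for f
    proof -
      obtain A g where A: "finite A" "\<forall>m. g m \<in> FK_dual (X m) (s m)" "\<forall>y\<in>Y. f y = (\<Sum>m\<in>A. g m y)"
        using rep[OF f] by blast
      have "convergent (\<lambda>n. \<Sum>m\<in>A. g m (Tmean p q n x))"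
        by (intro convergent_sum L) (use A in blast)
      then show ?thesis using A(3) TY by simp
    qed
    then show "x \<in> DF p q Y sY" unfolding DF_def using x by blast
  qed
  have DB: "DB p q Y sY = (\<Inter>n. DB p q (X n) (s n))"
  proof (intro equalityI subsetI)
    fix x assume "x \<in> DB p q Y sY"
    then show "x \<in> (\<Inter>n. DB p q (X n) (s n))" unfolding DB_def using Yi restr by blast
  next
    fix x assume "x \<in> (\<Inter>n. DB p q (X n) (s n))"
    then have xm: "\<And>m. x \<in> X m" and L: "\<And>m g. g \<in> FK_dual (X m) (s m) \<Longrightarrow> bounded (range (\<lambda>n. g (Tmean p q n x)))"
      unfolding DB_def by auto
    have x: "x \<in> Y" using xm Yi by blast
    have "bounded (range (\<lambda>n. f (Tmean p q n x)))" if f: "f \<in> FK_dual Y sY" for f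
    proof -
      obtain A g where A: "finite A" "\<forall>m. g m \<in> FK_dual (X m) (s m)" "\<forall>y\<in>Y. f y = (\<Sum>m\<in>A. g m y)"
        using rep[OF f] by blast
      have "\<forall>m\<in>A. Bseq (\<lambda>n. g m (Tmean p q n x))"
        unfolding Bseq_eq_bounded using L A(2) by blast
      then have "Bseq (\<lambda>n. \<Sum>m\<in>A. g m (Tmean p q n x))"
        using Bseq_sum2[OF A(1), of "\<lambda>m n. g m (Tmean p q n x)"] by simp
      then have "Bseq (\<lambda>n. f (Tmean p q n x))" using A(3) TY by simp
      then show ?thesis by (simp add: Bseq_eq_bounded)
    qed
    then show "x \<in> DB p q Y sY" unfolding DB_def using x by blast
  qed
  show ?thesis using DS DW DF DB by blast
qed


end
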